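(* Let $a,b\in\mathbb{Q}_3$ with $\gamma(a)=0$, $\gamma(b)=m>0$ and $a_0=2$. Then $x=\sum_{k\ge0}x_k3^k\in\mathbb{Z}_3^*$ is a solution of $x^3+ax=b$ if and only if the congruences $$x_0^3+a_0x_0\equiv0\pmod 3,$$ $$x_1a_0+x_0a_1+N_1(x_0)+M_1(x_0)\equiv 0\pmod 3,$$ $$x_ka_0+\dots+x_0a_k+x_0^2x_{k-1}+N_k(x_0,\dots,x_{k-1})+M_k(x_0,\dots,x_{k-1})\equiv0\pmod 3,\quad 2\le k\le m-1,$$ $$x_ka_0+\dots+x_0a_k+x_0^2x_{k-1}+N_k(x_0,\dots,x_{k-1})+M_k(x_0,\dots,x_{k-1})\equiv b_{k-m}\pmod 3,\quad k\ge m,$$ are fulfilled, where the integers $M_k(x_0,\dots,x_{k-1})$ are defined successively by $$x_0^3+2x_0=3M_1(x_0),$$ $$x_1a_0+x_0a_1+N_1(x_0)=-M_1(x_0)+3M_2(x_0,x_1),$$ $$x_ka_0+x_{k-1}a_1+\dots+x_0a_k+x_0^2x_{k-1}+N_k(x_0,\dots,x_{k-1})=-M_k(x_0,\dots,x_{k-1})+3M_{k+1}(x_0,\dots,x_k),\quad 2\le k\le m-1,$$ $$x_ka_0+x_{k-1}a_1+\dots+x_0a_k+x_0^2x_{k-1}+N_k(x_0,\dots,x_{k-1})=b_{k-m}-M_k(x_0,\dots,x_{k-1})+3M_{k+1}(x_0,\dots,x_k),\quad k\ge m.$$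
   Context: Write $a=3^{\gamma(a)}(a_0+a_13+a_23^2+\dots)$, $b=3^{\gamma(b)}(b_0+b_13+b_23^2+\dots)$ in canonical form, with digits $a_j,b_j\in\{0,1,2\}$, $a_0,b_0\ne0$, $\gamma(a),\gamma(b)\in\mathbb{Z}$. $\mathbb{Z}_3^*$ is the set of $3$-adic units; $x\in\mathbb{Z}_3^*$ is written $x=x_0+x_13+x_23^2+\dots$ with $x_j\in\{0,1,2\}$, $x_0\ne0$. For $k\ge1$, $N_k(x_0,\dots,x_{k-1})=\sum \frac{3!}{m_0!\cdots m_{k-1}!}x_0^{m_0}\cdots x_{k-1}^{m_{k-1}}$, the sum over nonnegative integers $m_0,\dots,m_{k-1}$ with $\sum_{i=0}^{k-1}m_i=3$ and $\sum_{i=1}^{k-1}im_i=k$; in particular $N_1=0$. *)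

theory Defs
  imports Main "HOL-Library.FuncSet" "HOL-Number_Theory.Cong"
begin

text \<open>3-adic numbers are represented by their canonical digit sequences
  (digits in {0,1,2}); an element of Z_3 is d_0 + d_1 3 + d_2 3^2 + ... .\<close>

definition digits3 :: "(nat \<Rightarrow> int) \<Rightarrow> bool" where
  "digits3 d \<longleftrightarrow> (\<forall>k. d k \<in> {0,1,2})"

definition trunc3 :: "(nat \<Rightarrow> int) \<Rightarrow> nat \<Rightarrow> int" where
  "trunc3 d n = (\<Sum>k<n. d k * 3 ^ k)"

definition shift3 :: "nat \<Rightarrow> (nat \<Rightarrow> int) \<Rightarrow> nat \<Rightarrow> int" where
  "shift3 m d k = (if k < m then 0 else d (k - m))"

text \<open>x^3 + a x = b holds in Z_3 = lim Z/3^n, where b = 3^m (b_0 + b_1 3 + ...).\<close>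
definition is_solution3 :: "(nat \<Rightarrow> int) \<Rightarrow> (nat \<Rightarrow> int) \<Rightarrow> nat \<Rightarrow> (nat \<Rightarrow> int) \<Rightarrow> bool" where
  "is_solution3 x a m bd \<longleftrightarrow>
     (\<forall>n. [trunc3 x n ^ 3 + trunc3 a n * trunc3 x n = trunc3 (shift3 m bd) n] (mod 3 ^ n))"

definition Ncoef :: "nat \<Rightarrow> (nat \<Rightarrow> int) \<Rightarrow> int" where
  "Ncoef k x = (\<Sum>mm \<in> {mm \<in> {..<k} \<rightarrow>\<^sub>E {0..3::nat}.
        (\<Sum>i<k. mm i) = 3 \<and> (\<Sum>i<k. i * mm i) = k}.
      int ((fact 3 :: nat) div (\<Prod>i<k. fact (mm i))) * (\<Prod>i<k. x i ^ mm i))"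

definition Ecoef :: "(nat \<Rightarrow> int) \<Rightarrow> (nat \<Rightarrow> int) \<Rightarrow> nat \<Rightarrow> int" where
  "Ecoef a x k = (\<Sum>j\<le>k. x j * a (k - j))
      + (if 2 \<le> k then x 0 ^ 2 * x (k - 1) else 0) + Ncoef k x"

text \<open>M_k, defined successively (index 0 unused).\<close>
fun Mseq :: "nat \<Rightarrow> (nat \<Rightarrow> int) \<Rightarrow> (nat \<Rightarrow> int) \<Rightarrow> (nat \<Rightarrow> int) \<Rightarrow> nat \<Rightarrow> int" where
  "Mseq m a bd x 0 = 0"
| "Mseq m a bd x (Suc 0) = (x 0 ^ 3 + 2 * x 0) div 3"
| "Mseq m a bd x (Suc (Suc k)) =
     (Ecoef a x (Suc k) + Mseq m a bd x (Suc k) - shift3 m bd (Suc k)) div 3"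

end

theory Submission
  imports Defs "HOL-Library.Multiset"
begin


lemma grp_mod:
  fixes f :: "'a \<Rightarrow> int" and h :: "'a \<Rightarrow> nat"
  assumes fin: "finite I"
  shows "(3::int)^n dvd (\<Sum>t\<in>I. f t * 3^(h t)) - (\<Sum>k<n. 3^k * (\<Sum>t\<in>{t\<in>I. h t = k}. f t))"
proof -
  let ?L = "{t\<in>I. h t < n}" and ?H = "{t\<in>I. \<not> h t < n}"
  have I: "I = ?L \<union> ?H" by auto
  have split: "(\<Sum>t\<in>I. f t * 3^(h t)) = (\<Sum>t\<in>?L. f t * 3^(h t)) + (\<Sum>t\<in>?H. f t * 3^(h t))"
    using fin by (subst I, subst sum.union_disjoint) auto
  have hi: "(3::int)^n dvd (\<Sum>t\<in>?H. f t * 3^(h t))"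
    by (rule dvd_sum) (auto intro!: dvd_mult le_imp_power_dvd)
  have lo: "(\<Sum>t\<in>?L. f t * 3^(h t)) = (\<Sum>k<n. 3^k * (\<Sum>t\<in>{t\<in>I. h t = k}. f t))"
  proof -
    have "(\<Sum>t\<in>?L. f t * 3^(h t)) = (\<Sum>k\<in>{..<n}. \<Sum>t\<in>{t. t\<in>?L \<and> h t = k}. f t * 3^(h t))"
      by (rule sum.group[symmetric]) (use fin in auto)
    also have "\<dots> = (\<Sum>k<n. 3^k * (\<Sum>t\<in>{t\<in>I. h t = k}. f t))"
    proof (rule sum.cong[OF refl])
      fix k assume "k \<in> {..<n}"
      then have "{t. t\<in>?L \<and> h t = k} = {t\<in>I. h t = k}" by auto
      then show "(\<Sum>t\<in>{t. t\<in>?L \<and> h t = k}. f t * 3^(h t)) = 3^k * (\<Sum>t\<in>{t\<in>I. h t = k}. f t)"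
        by (simp add: sum_distrib_left mult.commute)
    qed
    finally show ?thesis .
  qed
  show ?thesis using split hi lo by simp
qed

lemma trunc_cube:
  "trunc3 x n ^ 3 = (\<Sum>t\<in>{..<n}\<times>{..<n}\<times>{..<n}.
      (case t of (i,j,l) \<Rightarrow> x i * x j * x l) * 3^(case t of (i,j,l) \<Rightarrow> i+j+l))"
proof -
  have "trunc3 x n ^ 3 = (\<Sum>i<n. x i*3^i) * ((\<Sum>j<n. x j*3^j) * (\<Sum>l<n. x l*3^l))"
    by (simp add: trunc3_def power3_eq_cube)
  also have "\<dots> = (\<Sum>i<n. \<Sum>j<n. \<Sum>l<n. (x l*3^l)*((x j*3^j)*(x i*3^i)))"
    by (simp only: sum_distrib_left sum_distrib_right)
  also have "\<dots> = (\<Sum>i<n. \<Sum>(j,l)\<in>{..<n}\<times>{..<n}. (x l*3^l)*((x j*3^j)*(x i*3^i)))"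
    by (simp add: sum.cartesian_product)
  also have "\<dots> = (\<Sum>(i,jl)\<in>{..<n}\<times>({..<n}\<times>{..<n}). (case jl of (j,l) \<Rightarrow> (x l*3^l)*((x j*3^j)*(x i*3^i))))"
    by (simp add: sum.cartesian_product split_def)
  also have "\<dots> = (\<Sum>t\<in>{..<n}\<times>{..<n}\<times>{..<n}.
      (case t of (i,j,l) \<Rightarrow> x i * x j * x l) * 3^(case t of (i,j,l) \<Rightarrow> i+j+l))"
    by (rule sum.cong) (auto simp: power_add algebra_simps)
  finally show ?thesis .
qed

lemma trunc_lin:
  "trunc3 a n * trunc3 x n = (\<Sum>t\<in>{..<n}\<times>{..<n}.
      (case t of (i,j) \<Rightarrow> a i * x j) * 3^(case t of (i,j) \<Rightarrow> i+j))"
proof -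
  have "trunc3 a n * trunc3 x n = (\<Sum>i<n. \<Sum>j<n. (a i*3^i)*(x j*3^j))"
    by (simp add: trunc3_def sum_product)
  also have "\<dots> = (\<Sum>t\<in>{..<n}\<times>{..<n}.
      (case t of (i,j) \<Rightarrow> a i * x j) * 3^(case t of (i,j) \<Rightarrow> i+j))"
    by (simp add: sum.cartesian_product power_add algebra_simps split_def)
  finally show ?thesis .
qed

lemma pairs_sum: fixes a x :: "nat \<Rightarrow> int" shows "(\<Sum>t\<in>{(i,j). i+j=k}. case t of (i,j) \<Rightarrow> a i * (x j::int)) = (\<Sum>j\<le>k. x j * a (k-j))"
proof -
  have e: "{(i,j). i+j=k} = (\<lambda>j. (k-j, j)) ` {..k}"
  proof (rule set_eqI, rule iffI)
    fix t assume "t \<in> {(i,j). i+j=k}"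
    then obtain i j where t: "t = (i,j)" "i+j=k" by auto
    then show "t \<in> (\<lambda>j. (k-j, j)) ` {..k}" by (auto simp: image_iff intro!: bexI[of _ j])
  qed auto
  have "inj_on (\<lambda>j. (k-j, j)) {..k}" by (auto simp: inj_on_def)
  then show ?thesis by (simp add: e sum.reindex mult.commute)
qed




definition cnt :: "nat \<Rightarrow> nat \<Rightarrow> nat \<Rightarrow> nat \<Rightarrow> nat \<Rightarrow> nat" where
  "cnt k i j l = (\<lambda>u\<in>{..<k}. of_bool (i=u) + of_bool (j=u) + of_bool (l=u))"

definition Sset :: "nat \<Rightarrow> (nat \<Rightarrow> nat) set" where
  "Sset k = {mm \<in> {..<k} \<rightarrow>\<^sub>E {0..3::nat}. (\<Sum>i<k. mm i) = 3 \<and> (\<Sum>i<k. i * mm i) = k}"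

definition Pset :: "nat \<Rightarrow> (nat \<times> nat \<times> nat) set" where
  "Pset k = {(i,j,l). i+j+l=k \<and> i<k \<and> j<k \<and> l<k}"

lemma ofb_sum: "finite A \<Longrightarrow> i\<in>A \<Longrightarrow> (\<Sum>u\<in>A. g u * of_bool(i=u)) = (g i :: 'a::comm_semiring_1)"
proof -
  assume "finite A" "i \<in> A"
  have "(\<Sum>u\<in>A. g u * of_bool(i=u)) = (\<Sum>u\<in>A. if i = u then g u else 0)" by (rule sum.cong) auto
  then show ?thesis using \<open>finite A\<close> \<open>i\<in>A\<close> by simp
qed

lemma ofb_prod: "finite A \<Longrightarrow> i\<in>A \<Longrightarrow> (\<Prod>u\<in>A. g u ^ of_bool(i=u)) = (g i :: 'a::comm_monoid_mult)"
proof -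
  assume "finite A" "i \<in> A"
  have "(\<Prod>u\<in>A. g u ^ of_bool(i=u)) = (\<Prod>u\<in>A. if i = u then g u else 1)" by (rule prod.cong) auto
  then show ?thesis using \<open>finite A\<close> \<open>i\<in>A\<close> by simp
qed

lemma cnt_sum:
  assumes "i<k" "j<k" "l<k"
  shows "(\<Sum>u<k. g u * cnt k i j l u) = g i + g j + (g l :: nat)"
proof -
  have "(\<Sum>u<k. g u * cnt k i j l u) = (\<Sum>u<k. g u * of_bool (i=u) + g u * of_bool (j=u) + g u * of_bool (l=u))"
    by (rule sum.cong) (auto simp: cnt_def algebra_simps)
  also have "\<dots> = g i + g j + g l"
    using assms by (simp add: sum.distrib ofb_sum)
  finally show ?thesis .
qed

lemma cnt_prod:
  assumes "i<k" "j<k" "l<k"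
  shows "(\<Prod>u<k. x u ^ cnt k i j l u) = x i * x j * (x l :: int)"
proof -
  have "(\<Prod>u<k. x u ^ cnt k i j l u) = (\<Prod>u<k. x u ^ of_bool (i=u) * x u ^ of_bool (j=u) * x u ^ of_bool (l=u))"
    by (rule prod.cong) (auto simp: cnt_def power_add)
  also have "\<dots> = x i * x j * x l"
    using assms by (simp add: prod.distrib ofb_prod)
  finally show ?thesis .
qed

lemma cnt_in_S: assumes "(i,j,l) \<in> Pset k" shows "cnt k i j l \<in> Sset k"
proof -
  have lt: "i<k" "j<k" "l<k" and s: "i+j+l = k" using assms by (auto simp: Pset_def)
  have "cnt k i j l \<in> {..<k} \<rightarrow>\<^sub>E {0..3}" by (auto simp: cnt_def)
  moreover have "(\<Sum>u<k. cnt k i j l u) = 3" using cnt_sum[OF lt, of "\<lambda>_. 1"] by simp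
  moreover have "(\<Sum>u<k. u * cnt k i j l u) = k" using cnt_sum[OF lt, of "\<lambda>u. u"] s by simp
  ultimately show ?thesis by (simp add: Sset_def)
qed

lemma decomp:
  fixes mm :: "'a \<Rightarrow> nat"
  assumes "finite A" shows "(\<Sum>u\<in>A. mm u) = n \<Longrightarrow> \<exists>xs. length xs = n \<and> set xs \<subseteq> A \<and> (\<forall>u\<in>A. mm u = count (mset xs) u)"
proof (induction n arbitrary: mm)
  case 0
  then show ?case using assms by (intro exI[of _ "[]"]) auto
next
  case (Suc n)
  obtain p where p: "p \<in> A" "mm p > 0"
    using Suc.prems by (metis gr0I sum.neutral nat.distinct(1))
  define mm' where "mm' = mm(p := mm p - 1)"
  have "(\<Sum>u\<in>A. mm u) = mm p + (\<Sum>u\<in>A-{p}. mm u)" using assms p by (simp add: sum.remove)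
  moreover have "(\<Sum>u\<in>A. mm' u) = mm' p + (\<Sum>u\<in>A-{p}. mm' u)" using assms p by (simp add: sum.remove)
  moreover have "(\<Sum>u\<in>A-{p}. mm' u) = (\<Sum>u\<in>A-{p}. mm u)" by (rule sum.cong) (auto simp: mm'_def)
  ultimately have "(\<Sum>u\<in>A. mm' u) = n" using Suc.prems p by (simp add: mm'_def)
  then obtain xs where xs: "length xs = n" "set xs \<subseteq> A" "\<forall>u\<in>A. mm' u = count (mset xs) u"
    using Suc.IH by blast
  show ?case
  proof (intro exI[of _ "p # xs"] conjI ballI)
    fix u assume "u \<in> A"
    then show "mm u = count (mset (p # xs)) u" using xs(3) p by (auto simp: mm'_def)
  qed (use xs p in auto)
qed

lemma S_surj: assumes "mm \<in> Sset k" shows "\<exists>i j l. (i,j,l) \<in> Pset k \<and> mm = cnt k i j l"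
proof -
  have pie: "mm \<in> {..<k} \<rightarrow>\<^sub>E {0..3}" and s3: "(\<Sum>u<k. mm u) = 3" and sk: "(\<Sum>u<k. u * mm u) = k"
    using assms by (auto simp: Sset_def)
  obtain xs where xs: "length xs = 3" "set xs \<subseteq> {..<k}" "\<forall>u\<in>{..<k}. mm u = count (mset xs) u"
    using decomp[OF _ s3] by auto
  then obtain i j l where ijl: "xs = [i,j,l]"
    by (metis (no_types) length_0_conv length_Suc_conv numeral_3_eq_3)
  have lt: "i<k" "j<k" "l<k" using xs(2) ijl by auto
  have eq: "mm = cnt k i j l"
  proof
    fix u show "mm u = cnt k i j l u"
    proof (cases "u < k")
      case True then show ?thesis using xs(3) ijl by (auto simp: cnt_def)
    next
      case False then show ?thesis using pie by (auto simp: cnt_def PiE_def extensional_def)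
    qed
  qed
  have "i+j+l = k" using sk cnt_sum[OF lt, of "\<lambda>u. u"] eq by simp
  then show ?thesis using lt eq by (auto simp: Pset_def)
qed


lemma pair2: "{#j,l#} = {#q,r::'a#} \<Longrightarrow> (j=q \<and> l=r) \<or> (j=r \<and> l=q)"
  by (auto simp: add_eq_conv_ex)
lemma perm3_ms:
  fixes i j l p q r :: 'a
  assumes A: "{#i,j,l#} = {#p,q,r#}"
  shows "(i,j,l) \<in> {(p,q,r),(p,r,q),(q,p,r),(q,r,p),(r,p,q),(r,q,p)}"
proof -
  have "i \<in># {#p,q,r#}" unfolding A[symmetric] by simp
  then have c: "i = p \<or> i = q \<or> i = r" by simp
  have e2: "{#p,q,r#} = {#q,p,r#}" by (rule add_mset_commute)
  have e3: "{#p,q,r#} = {#r,p,q#}" by (simp only: add_mset_commute)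
  have A2: "add_mset i {#j,l#} = add_mset q {#p,r#}" by (rule trans[OF A e2])
  have A3: "add_mset i {#j,l#} = add_mset r {#p,q#}" by (rule trans[OF A e3])
  from c show ?thesis
  proof (elim disjE)
    assume "i = p"
    then have pp: "{#j,l#} = {#q,r#}" using A by simp
    then show ?thesis using \<open>i = p\<close> pair2[OF pp] by auto
  next
    assume "i = q"
    then have pp: "{#j,l#} = {#p,r#}" using A2 by simp
    then show ?thesis using \<open>i = q\<close> pair2[OF pp] by auto
  next
    assume "i = r"
    then have pp: "{#j,l#} = {#p,q#}" using A3 by simp
    then show ?thesis using \<open>i = r\<close> pair2[OF pp] by auto
  qed
qed

definition Perms :: "nat \<Rightarrow> nat \<Rightarrow> nat \<Rightarrow> (nat \<times> nat \<times> nat) set" where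
  "Perms p q r = {(p,q,r),(p,r,q),(q,p,r),(q,r,p),(r,p,q),(r,q,p)}"

lemma cnt_mset: "u<k \<Longrightarrow> cnt k i j l u = count {#i,j,l#} u"
  by (simp add: cnt_def)

lemma cnt_alt: "cnt k i j l = (\<lambda>u\<in>{..<k}. count {#i,j,l#} u)"
  unfolding cnt_def by (rule restrict_ext) simp

lemma cnt_eq:
  assumes lt: "i<k" "j<k" "l<k" "p<k" "q<k" "r<k" and e: "cnt k i j l = cnt k p q r"
  shows "{#i,j,l#} = {#p,q,r#}"
proof (rule multiset_eqI)
  fix u
  show "count {#i,j,l#} u = count {#p,q,r#} u"
  proof (cases "u<k")
    case True
    then show ?thesis using e cnt_mset[OF True, of i j l] cnt_mset[OF True, of p q r] by simp
  next
    case False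
    then show ?thesis using lt by auto
  qed
qed

lemma fiber:
  assumes "(p,q,r) \<in> Pset k"
  shows "{t\<in>Pset k. (case t of (i,j,l) \<Rightarrow> cnt k i j l) = cnt k p q r} = Perms p q r"
proof
  have lt: "p<k" "q<k" "r<k" using assms by (auto simp: Pset_def)
  show "{t\<in>Pset k. (case t of (i,j,l) \<Rightarrow> cnt k i j l) = cnt k p q r} \<subseteq> Perms p q r"
  proof
    fix t assume t: "t \<in> {t\<in>Pset k. (case t of (i,j,l) \<Rightarrow> cnt k i j l) = cnt k p q r}"
    obtain i j l where tt: "t = (i,j,l)" by (cases t) auto
    have lt2: "i<k" "j<k" "l<k" and e: "cnt k i j l = cnt k p q r" using t tt by (auto simp: Pset_def)
    show "t \<in> Perms p q r" unfolding tt Perms_def by (rule perm3_ms[OF cnt_eq[OF lt2 lt e]])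
  qed
  show "Perms p q r \<subseteq> {t\<in>Pset k. (case t of (i,j,l) \<Rightarrow> cnt k i j l) = cnt k p q r}"
  proof
    fix t assume t: "t \<in> Perms p q r"
    have "\<forall>t\<in>Perms p q r. t \<in> Pset k \<and> (case t of (i,j,l) \<Rightarrow> {#i,j,l#}) = {#p,q,r#}"
      using assms by (auto simp: Perms_def Pset_def add_mset_commute)
    then have tP: "t \<in> Pset k" and tm: "(case t of (i,j,l) \<Rightarrow> {#i,j,l#}) = {#p,q,r#}" using t by auto
    obtain i j l where tt: "t = (i,j,l)" by (cases t) auto
    have em: "{#i,j,l#} = {#p,q,r#}" using tm tt by simp
    have "cnt k i j l = cnt k p q r" by (simp only: cnt_alt em)
    then show "t \<in> {t\<in>Pset k. (case t of (i,j,l) \<Rightarrow> cnt k i j l) = cnt k p q r}"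
      using tP tt by simp
  qed
qed

lemma card_fact:
  assumes lt: "p<k" "q<k" "r<k"
  shows "card (Perms p q r) * (\<Prod>u<k. fact (cnt k p q r u)) = (6::nat)"
proof -
  have "(\<Prod>u\<in>{p,q,r}. fact (cnt k p q r u)) = (\<Prod>u<k. fact (cnt k p q r u) :: nat)"
    by (rule prod.mono_neutral_left) (use lt in \<open>auto simp: cnt_def\<close>)
  moreover have "card (Perms p q r) * (\<Prod>u\<in>{p,q,r}. fact (cnt k p q r u)) = (6::nat)"
  proof -
    consider "p=q" "q=r" | "p=q" "q\<noteq>r" | "p\<noteq>q" "q=r" | "p\<noteq>q" "p=r" "q\<noteq>r" | "p\<noteq>q" "p\<noteq>r" "q\<noteq>r" by blast
    then show ?thesis
    proof cases
      case 1 then show ?thesis using lt by (simp add: Perms_def cnt_def fact_numeral card_insert_if)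
    next
      case 2 then show ?thesis using lt by (simp add: Perms_def cnt_def fact_numeral card_insert_if)
    next
      case 3 then show ?thesis using lt by (simp add: Perms_def cnt_def fact_numeral card_insert_if)
    next
      case 4 have e: "{r,q,r} = {q,r}" by auto
      show ?thesis using 4 lt by (simp add: e Perms_def cnt_def fact_numeral card_insert_if)
    next
      case 5 then show ?thesis using lt by (simp add: Perms_def cnt_def fact_numeral card_insert_if)
    qed
  qed
  ultimately show ?thesis by simp
qed

lemma finite_Pset: "finite (Pset k)"
  by (rule finite_subset[of _ "{..<k}\<times>{..<k}\<times>{..<k}"]) (auto simp: Pset_def)

lemma finite_Sset: "finite (Sset k)"
  by (rule finite_subset[of _ "{..<k} \<rightarrow>\<^sub>E {0..3::nat}"]) (auto simp: Sset_def intro: finite_PiE)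



lemma Ncoef_eq: "(\<Sum>t\<in>Pset k. case t of (i,j,l) \<Rightarrow> x i * x j * x l) = Ncoef k x"
proof -
  let ?c = "\<lambda>t. case t of (i,j,l) \<Rightarrow> cnt k i j l"
  let ?f = "\<lambda>t. case t of (i,j,l) \<Rightarrow> x i * x j * x l"
  have "(\<Sum>t\<in>Pset k. ?f t) = (\<Sum>mm\<in>Sset k. \<Sum>t\<in>{t. t\<in>Pset k \<and> ?c t = mm}. ?f t)"
    by (rule sum.group[symmetric]) (auto simp: finite_Pset finite_Sset intro: cnt_in_S)
  also have "\<dots> = (\<Sum>mm\<in>Sset k. int ((fact 3 :: nat) div (\<Prod>i<k. fact (mm i))) * (\<Prod>i<k. x i ^ mm i))"
  proof (rule sum.cong[OF refl])
    fix mm assume "mm \<in> Sset k"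
    then obtain p q r where pqr: "(p,q,r) \<in> Pset k" and mm: "mm = cnt k p q r" using S_surj by blast
    have lt: "p<k" "q<k" "r<k" using pqr by (auto simp: Pset_def)
    have fib: "{t. t\<in>Pset k \<and> ?c t = mm} = Perms p q r" using fiber[OF pqr] mm by simp
    have const: "?f t = (\<Prod>i<k. x i ^ mm i)" if "t \<in> Perms p q r" for t
    proof -
      obtain i j l where tt: "t = (i,j,l)" by (cases t) auto
      have "t \<in> {t. t\<in>Pset k \<and> ?c t = mm}" using that fib by simp
      then have lt2: "i<k" "j<k" "l<k" and e: "cnt k i j l = mm" using tt by (auto simp: Pset_def)
      show ?thesis using cnt_prod[OF lt2, of x] e tt by simp
    qed
    have cf: "card (Perms p q r) * (\<Prod>u<k. fact (mm u)) = (6::nat)" using card_fact[OF lt] mm by simp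
    then have "(\<Prod>u<k. fact (mm u)) > (0::nat)" by (cases "(\<Prod>u<k. fact (mm u)) = (0::nat)") auto
    then have dv0: "card (Perms p q r) * (\<Prod>i<k. fact (mm i)) div (\<Prod>i<k. fact (mm i)) = card (Perms p q r)"
      by (rule div_mult_self_is_m)
    have f3: "(fact 3 :: nat) = 6" by (simp add: fact_numeral)
    have dv: "(fact 3 :: nat) div (\<Prod>i<k. fact (mm i)) = card (Perms p q r)"
      using dv0 unfolding cf f3 .
    then show "(\<Sum>t\<in>{t. t\<in>Pset k \<and> ?c t = mm}. ?f t) = int ((fact 3 :: nat) div (\<Prod>i<k. fact (mm i))) * (\<Prod>i<k. x i ^ mm i)"
    proof -
      have "(\<Sum>t\<in>{t. t\<in>Pset k \<and> ?c t = mm}. ?f t) = (\<Sum>t\<in>Perms p q r. (\<Prod>i<k. x i ^ mm i))"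
        unfolding fib by (rule sum.cong[OF refl]) (rule const)
      also have "\<dots> = int (card (Perms p q r)) * (\<Prod>i<k. x i ^ mm i)" by simp
      finally show ?thesis by (simp only: dv)
    qed
  qed
  also have "\<dots> = Ncoef k x" unfolding Ncoef_def Sset_def by (rule refl)
  finally show ?thesis .
qed



definition Eall :: "(nat \<Rightarrow> int) \<Rightarrow> (nat \<Rightarrow> int) \<Rightarrow> nat \<Rightarrow> int" where
  "Eall a x k = (if k = 0 then x 0 ^ 3 + a 0 * x 0 else Ecoef a x k)"

lemma triples_pos:
  assumes "k \<ge> 1"
  shows "(\<Sum>t\<in>{(i,j,l). i+j+l=k}. case t of (i,j,l) \<Rightarrow> x i * x j * (x l::int)) = Ncoef k x + 3 * x 0^2 * x k"
proof -
  have e: "{(i,j,l). i+j+l=k} = Pset k \<union> {(k,0,0),(0,k,0),(0,0,k)}"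
    using assms by (auto simp: Pset_def)
  have d: "Pset k \<inter> {(k,0,0),(0,k,0),(0,0,k)} = {}" by (auto simp: Pset_def)
  have "(\<Sum>t\<in>{(i,j,l). i+j+l=k}. case t of (i,j,l) \<Rightarrow> x i * x j * (x l::int))
     = (\<Sum>t\<in>Pset k. case t of (i,j,l) \<Rightarrow> x i * x j * (x l::int))
       + (\<Sum>t\<in>{(k,0,0),(0,k,0),(0,0,k)}. case t of (i,j,l) \<Rightarrow> x i * x j * (x l::int))"
    unfolding e by (rule sum.union_disjoint) (auto simp: finite_Pset d)
  also have "\<dots> = Ncoef k x + (\<Sum>t\<in>{(k,0,0),(0,k,0),(0,0,k)}. case t of (i,j,l) \<Rightarrow> x i * x j * (x l::int))"
    by (simp only: Ncoef_eq)
  also have "\<dots> = Ncoef k x + 3 * x 0^2 * x k"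
    using assms by (simp add: power2_eq_square algebra_simps)
  finally show ?thesis .
qed

lemma triples_zero:
  "(\<Sum>t\<in>{(i,j,l). i+j+l=(0::nat)}. case t of (i,j,l) \<Rightarrow> x i * x j * (x l::int)) = x 0 ^ 3"
proof -
  have e: "{(i,j,l). i+j+l=(0::nat)} = {(0,0,0)}" by auto
  show ?thesis by (simp add: e power3_eq_cube)
qed

lemma telesc:
  fixes c e y :: "nat \<Rightarrow> int"
  assumes c0: "c 0 = e 0" and ck: "\<And>k. k \<ge> 1 \<Longrightarrow> c k = e k + 3 * y k - (if k \<ge> 2 then y (k-1) else 0)"
  shows "(\<Sum>k<n. 3^k * c k) - (\<Sum>k<n. 3^k * e k) = (if n \<ge> 2 then 3^n * y (n-1) else 0)"
proof (induction n)
  case 0 then show ?case by simp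
next
  case (Suc n)
  have "(\<Sum>k<Suc n. 3^k * c k) - (\<Sum>k<Suc n. 3^k * e k)
      = ((\<Sum>k<n. 3^k * c k) - (\<Sum>k<n. 3^k * e k)) + 3^n * (c n - e n)"
    by (simp add: algebra_simps)
  also have "\<dots> = (if Suc n \<ge> 2 then 3^(Suc n) * y n else 0)"
  proof (cases "n = 0")
    case True then show ?thesis using c0 Suc.IH by simp
  next
    case False
    then have cn: "c n - e n = 3 * y n - (if n \<ge> 2 then y (n-1) else 0)" using ck[of n] by simp
    show ?thesis
    proof (cases "n = 1")
      case True then show ?thesis using Suc.IH cn by simp
    next
      case False
      then have "n \<ge> 2" using \<open>n \<noteq> 0\<close> by simp
      have "((\<Sum>k<n. 3^k * c k) - (\<Sum>k<n. 3^k * e k)) + 3^n * (c n - e n) = 3^n * y (n-1) + 3^n * (3 * y n - y (n-1))"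
        using Suc.IH cn \<open>n \<ge> 2\<close> by simp
      also have "\<dots> = 3^(Suc n) * y n" by (simp add: algebra_simps)
      finally show ?thesis using \<open>n \<ge> 2\<close> by simp
    qed
  qed
  finally show ?case by simp
qed

lemma keyK:
  fixes a x :: "nat \<Rightarrow> int"
  shows "(3::int)^n dvd (trunc3 x n ^ 3 + trunc3 a n * trunc3 x n) - (\<Sum>k<n. 3^k * Eall a x k)"
proof -
  define cube where "cube k = (\<Sum>t\<in>{(i,j,l). i+j+l=k}. case t of (i,j,l) \<Rightarrow> x i * x j * (x l::int))" for k
  define lin where "lin k = (\<Sum>j\<le>k. x j * a (k-j))" for k
  have h1: "(3::int)^n dvd trunc3 x n ^ 3 - (\<Sum>k<n. 3^k * cube k)"
  proof -
    have g: "(3::int)^n dvd (\<Sum>t\<in>{..<n}\<times>{..<n}\<times>{..<n}. (case t of (i,j,l) \<Rightarrow> x i * x j * x l) * 3^(case t of (i,j,l) \<Rightarrow> i+j+l))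
       - (\<Sum>k<n. 3^k * (\<Sum>t\<in>{t\<in>{..<n}\<times>{..<n}\<times>{..<n}. (case t of (i,j,l) \<Rightarrow> i+j+l) = k}. (case t of (i,j,l) \<Rightarrow> x i * x j * x l)))"
      by (rule grp_mod) simp
    have "(\<Sum>k<n. 3^k * (\<Sum>t\<in>{t\<in>{..<n}\<times>{..<n}\<times>{..<n}. (case t of (i,j,l) \<Rightarrow> i+j+l) = k}. (case t of (i,j,l) \<Rightarrow> x i * x j * x l)))
        = (\<Sum>k<n. 3^k * cube k)"
    proof (rule sum.cong[OF refl])
      fix k assume "k \<in> {..<n}"
      then have "{t\<in>{..<n}\<times>{..<n}\<times>{..<n}. (case t of (i,j,l) \<Rightarrow> i+j+l) = k} = {(i,j,l). i+j+l=k}" by auto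
      then show "3^k * (\<Sum>t\<in>{t\<in>{..<n}\<times>{..<n}\<times>{..<n}. (case t of (i,j,l) \<Rightarrow> i+j+l) = k}. (case t of (i,j,l) \<Rightarrow> x i * x j * x l)) = 3^k * cube k"
        by (simp add: cube_def)
    qed
    then show ?thesis using g by (simp add: trunc_cube)
  qed
  have h2: "(3::int)^n dvd trunc3 a n * trunc3 x n - (\<Sum>k<n. 3^k * lin k)"
  proof -
    have g: "(3::int)^n dvd (\<Sum>t\<in>{..<n}\<times>{..<n}. (case t of (i,j) \<Rightarrow> a i * x j) * 3^(case t of (i,j) \<Rightarrow> i+j))
       - (\<Sum>k<n. 3^k * (\<Sum>t\<in>{t\<in>{..<n}\<times>{..<n}. (case t of (i,j) \<Rightarrow> i+j) = k}. (case t of (i,j) \<Rightarrow> a i * x j)))"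
      by (rule grp_mod) simp
    have "(\<Sum>k<n. 3^k * (\<Sum>t\<in>{t\<in>{..<n}\<times>{..<n}. (case t of (i,j) \<Rightarrow> i+j) = k}. (case t of (i,j) \<Rightarrow> a i * x j)))
        = (\<Sum>k<n. 3^k * lin k)"
    proof (rule sum.cong[OF refl])
      fix k assume "k \<in> {..<n}"
      then have "{t\<in>{..<n}\<times>{..<n}. (case t of (i,j) \<Rightarrow> i+j) = k} = {(i,j). i+j=k}" by auto
      then show "3^k * (\<Sum>t\<in>{t\<in>{..<n}\<times>{..<n}. (case t of (i,j) \<Rightarrow> i+j) = k}. (case t of (i,j) \<Rightarrow> a i * x j)) = 3^k * lin k"
        by (simp add: lin_def pairs_sum)
    qed
    then show ?thesis using g by (simp add: trunc_lin)
  qed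
  have h3: "(\<Sum>k<n. 3^k * (cube k + lin k)) - (\<Sum>k<n. 3^k * Eall a x k) = (if n \<ge> 2 then 3^n * (x 0^2 * x (n-1)) else 0)"
  proof (rule telesc)
    show "cube 0 + lin 0 = Eall a x 0" by (simp add: cube_def lin_def Eall_def triples_zero power3_eq_cube)
    fix k :: nat assume "k \<ge> 1"
    then show "cube k + lin k = Eall a x k + 3 * (x 0^2 * x k) - (if k \<ge> 2 then x 0^2 * x (k-1) else 0)"
      by (simp add: cube_def lin_def Eall_def Ecoef_def triples_pos)
  qed
  have h4: "(3::int)^n dvd (\<Sum>k<n. 3^k * (cube k + lin k)) - (\<Sum>k<n. 3^k * Eall a x k)"
    unfolding h3 by simp
  have sd: "(\<Sum>k<n. 3^k*(cube k + lin k)) = (\<Sum>k<n. 3^k*cube k) + (\<Sum>k<n. 3^k*lin k)"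
    by (simp add: sum.distrib distrib_left)
  have eq: "(trunc3 x n ^ 3 + trunc3 a n * trunc3 x n) - (\<Sum>k<n. 3^k * Eall a x k)
     = (trunc3 x n ^ 3 - (\<Sum>k<n. 3^k * cube k)) + (trunc3 a n * trunc3 x n - (\<Sum>k<n. 3^k * lin k))
       + ((\<Sum>k<n. 3^k * (cube k + lin k)) - (\<Sum>k<n. 3^k * Eall a x k))"
    using sd by (simp add: algebra_simps)
  show ?thesis unfolding eq by (intro dvd_add h1 h2 h4)
qed



lemma Mrec:
  assumes "m > 0" "a 0 = 2"
  shows "Mseq m a bd x (Suc k) = (Eall a x k + Mseq m a bd x k - shift3 m bd k) div 3"
proof (cases k)
  case 0 then show ?thesis using assms by (simp add: Eall_def shift3_def)
next
  case (Suc k') then show ?thesis by (simp add: Eall_def)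
qed

lemma tele:
  assumes m: "m > 0" and a0: "a 0 = 2"
    and c: "\<forall>j<n. (3::int) dvd (Eall a x j + Mseq m a bd x j - shift3 m bd j)"
  shows "(\<Sum>k<n. 3^k * Eall a x k) - trunc3 (shift3 m bd) n = 3^n * Mseq m a bd x n"
  using c
proof (induction n)
  case 0 then show ?case by (simp add: trunc3_def)
next
  case (Suc n)
  let ?X = "Eall a x n + Mseq m a bd x n - shift3 m bd n"
  have d: "(3::int) dvd ?X" using Suc.prems by simp
  have IH: "(\<Sum>k<n. 3^k * Eall a x k) - trunc3 (shift3 m bd) n = 3^n * Mseq m a bd x n"
    using Suc.prems by (intro Suc.IH) simp
  have "(\<Sum>k<Suc n. 3^k * Eall a x k) - trunc3 (shift3 m bd) (Suc n)
      = ((\<Sum>k<n. 3^k * Eall a x k) - trunc3 (shift3 m bd) n) + 3^n * (Eall a x n - shift3 m bd n)"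
    by (simp add: trunc3_def algebra_simps)
  also have "\<dots> = 3^n * ?X" using IH by (simp add: algebra_simps)
  also have "\<dots> = 3^n * (3 * (?X div 3))" using d by simp
  also have "\<dots> = 3^(Suc n) * Mseq m a bd x (Suc n)" using Mrec[where m=m and a=a, OF m a0] by simp
  finally show ?case .
qed

lemma sol_iff:
  "is_solution3 x a m bd \<longleftrightarrow> (\<forall>n. (3::int)^n dvd (\<Sum>k<n. 3^k * Eall a x k) - trunc3 (shift3 m bd) n)"
proof -
  have "[trunc3 x n ^ 3 + trunc3 a n * trunc3 x n = trunc3 (shift3 m bd) n] (mod 3^n) \<longleftrightarrow>
        (3::int)^n dvd (\<Sum>k<n. 3^k * Eall a x k) - trunc3 (shift3 m bd) n" for n
  proof -
    have K: "(3::int)^n dvd (trunc3 x n ^ 3 + trunc3 a n * trunc3 x n) - (\<Sum>k<n. 3^k * Eall a x k)"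
      by (rule keyK)
    have e: "(trunc3 x n ^ 3 + trunc3 a n * trunc3 x n) - trunc3 (shift3 m bd) n
      = ((trunc3 x n ^ 3 + trunc3 a n * trunc3 x n) - (\<Sum>k<n. 3^k * Eall a x k))
        + ((\<Sum>k<n. 3^k * Eall a x k) - trunc3 (shift3 m bd) n)" by simp
    have "[trunc3 x n ^ 3 + trunc3 a n * trunc3 x n = trunc3 (shift3 m bd) n] (mod 3^n) \<longleftrightarrow>
      (3::int)^n dvd (trunc3 x n ^ 3 + trunc3 a n * trunc3 x n) - trunc3 (shift3 m bd) n"
      by (rule cong_iff_dvd_diff)
    also have "\<dots> \<longleftrightarrow> (3::int)^n dvd ((trunc3 x n ^ 3 + trunc3 a n * trunc3 x n) - (\<Sum>k<n. 3^k * Eall a x k))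
        + ((\<Sum>k<n. 3^k * Eall a x k) - trunc3 (shift3 m bd) n)" by (simp only: e)
    also have "\<dots> \<longleftrightarrow> (3::int)^n dvd (\<Sum>k<n. 3^k * Eall a x k) - trunc3 (shift3 m bd) n"
      using K by (rule dvd_add_right_iff)
    finally show ?thesis .
  qed
  then show ?thesis unfolding is_solution3_def by blast
qed

theorem theorem3p2:
  fixes a bd x :: "nat \<Rightarrow> int" and m :: nat
  assumes "digits3 a" and "a 0 = 2"
    and "digits3 bd" and "bd 0 \<noteq> 0" and "m > 0"
    and "digits3 x" and "x 0 \<noteq> 0"
  shows "is_solution3 x a m bd \<longleftrightarrow>
    ([x 0 ^ 3 + a 0 * x 0 = 0] (mod 3) \<and>
     (\<forall>k\<ge>1. [Ecoef a x k + Mseq m a bd x k = shift3 m bd k] (mod 3)))"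
proof -
  note m = \<open>m > 0\<close> and a0 = \<open>a 0 = 2\<close>
  define cond where "cond j \<longleftrightarrow> (3::int) dvd (Eall a x j + Mseq m a bd x j - shift3 m bd j)" for j
  have rhs: "([x 0 ^ 3 + a 0 * x 0 = 0] (mod 3) \<and>
     (\<forall>k\<ge>1. [Ecoef a x k + Mseq m a bd x k = shift3 m bd k] (mod 3))) \<longleftrightarrow> (\<forall>j. cond j)"
  proof
    assume h: "[x 0 ^ 3 + a 0 * x 0 = 0] (mod 3) \<and>
     (\<forall>k\<ge>1. [Ecoef a x k + Mseq m a bd x k = shift3 m bd k] (mod 3))"
    show "\<forall>j. cond j"
    proof
      fix j show "cond j"
      proof (cases "j = 0")
        case True then show ?thesis using h m by (simp add: cond_def Eall_def shift3_def cong_iff_dvd_diff)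
      next
        case False then show ?thesis using h by (simp add: cond_def Eall_def cong_iff_dvd_diff)
      qed
    qed
  next
    assume h: "\<forall>j. cond j"
    have "cond 0" using h by simp
    then have "[x 0 ^ 3 + a 0 * x 0 = 0] (mod 3)" using m by (simp add: cond_def Eall_def shift3_def cong_iff_dvd_diff)
    moreover have "\<forall>k\<ge>1. [Ecoef a x k + Mseq m a bd x k = shift3 m bd k] (mod 3)"
    proof (intro allI impI)
      fix k :: nat assume "k \<ge> 1"
      then show "[Ecoef a x k + Mseq m a bd x k = shift3 m bd k] (mod 3)"
        using h[rule_format, of k] by (simp add: cond_def Eall_def cong_iff_dvd_diff)
    qed
    ultimately show "[x 0 ^ 3 + a 0 * x 0 = 0] (mod 3) \<and>
     (\<forall>k\<ge>1. [Ecoef a x k + Mseq m a bd x k = shift3 m bd k] (mod 3))" by blast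
  qed
  have main: "(\<forall>n. (3::int)^n dvd (\<Sum>k<n. 3^k * Eall a x k) - trunc3 (shift3 m bd) n) \<longleftrightarrow> (\<forall>j. cond j)"
  proof
    assume H: "\<forall>n. (3::int)^n dvd (\<Sum>k<n. 3^k * Eall a x k) - trunc3 (shift3 m bd) n"
    have "cond n" for n
    proof (induction n rule: less_induct)
      case (less n)
      let ?X = "Eall a x n + Mseq m a bd x n - shift3 m bd n"
      have T: "(\<Sum>k<n. 3^k * Eall a x k) - trunc3 (shift3 m bd) n = 3^n * Mseq m a bd x n"
        using less.IH by (intro tele[where m=m and a=a, OF m a0]) (simp add: cond_def)
      have "(\<Sum>k<Suc n. 3^k * Eall a x k) - trunc3 (shift3 m bd) (Suc n)
          = ((\<Sum>k<n. 3^k * Eall a x k) - trunc3 (shift3 m bd) n) + 3^n * (Eall a x n - shift3 m bd n)"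
        by (simp add: trunc3_def algebra_simps)
      also have "\<dots> = 3^n * ?X" using T by (simp add: algebra_simps)
      finally have "(3::int)^(Suc n) dvd 3^n * ?X" using H by metis
      then have "(3::int)^n * 3 dvd 3^n * ?X" by (simp add: mult.commute)
      then have "(3::int) dvd ?X" by (subst (asm) dvd_times_left_cancel_iff) simp_all
      then show ?case by (simp add: cond_def)
    qed
    then show "\<forall>j. cond j" by blast
  next
    assume h: "\<forall>j. cond j"
    show "\<forall>n. (3::int)^n dvd (\<Sum>k<n. 3^k * Eall a x k) - trunc3 (shift3 m bd) n"
    proof
      fix n
      have "(\<Sum>k<n. 3^k * Eall a x k) - trunc3 (shift3 m bd) n = 3^n * Mseq m a bd x n"
        using h by (intro tele[where m=m and a=a, OF m a0]) (simp add: cond_def)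
      then show "(3::int)^n dvd (\<Sum>k<n. 3^k * Eall a x k) - trunc3 (shift3 m bd) n" by simp
    qed
  qed
  show ?thesis unfolding sol_iff main rhs ..
qed


end
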